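(* Let $n\geq1$, $0<\sigma<2$ and $0<\gamma<1$. For $y>0$ let $P^\sigma_y(x)=(I(\sigma))^{-1}y^\sigma(y^2+|x|^2)^{-(n+\sigma)/2}$, $x\in\mathbb{R}^n$, where $I(\sigma)=\omega_n\int_0^\infty(1+\rho^2)^{-(n+\sigma)/2}\rho^{n-1}d\rho$ and $\omega_n$ is the surface area of the unit sphere. For $x\in\mathbb{R}^n\setminus\{0\}$ and $y>0$ set $\mathfrak{s}_\gamma(x,y,\sigma)=\sup_{z\in B(x,\gamma|x|)}P^\sigma_y(z)$ and $\mathfrak{i}_\gamma(x,y,\sigma)=\inf_{z\in B(x,\gamma|x|)}P^\sigma_y(z)$. Then \[\frac{\mathfrak{s}_\gamma(x,y,\sigma)}{\mathfrak{i}_\gamma(x,y,\sigma)}<\left(\frac{1+\gamma}{1-\gamma}\right)^{n+\sigma}\] for all $x\in\mathbb{R}^n\setminus\{0\}$ and $y>0$, and \[\sup_{x\neq0,\,y>0}\frac{\mathfrak{s}_\gamma(x,y,\sigma)}{\mathfrak{i}_\gamma(x,y,\sigma)}=\left(\frac{1+\gamma}{1-\gamma}\right)^{n+\sigma}.\] *)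

theory Defs
  imports "HOL-Analysis.Analysis"
begin

definition sphere_area :: "'n::finite itself \<Rightarrow> real" where
  "sphere_area _ = real CARD('n) * measure lborel (ball (0::real^'n) 1)"

definition I_const :: "'n::finite itself \<Rightarrow> real \<Rightarrow> real" where
  "I_const T \<sigma> = sphere_area T *
     (LBINT \<rho>:{0<..}. (1 + \<rho>\<^sup>2) powr (-(real CARD('n) + \<sigma>) / 2) * \<rho> ^ (CARD('n) - 1))"

definition poisson_kernel :: "real \<Rightarrow> real \<Rightarrow> real^'n \<Rightarrow> real" where
  "poisson_kernel \<sigma> y x = inverse (I_const TYPE('n) \<sigma>) * y powr \<sigma> *
     (y\<^sup>2 + (norm x)\<^sup>2) powr (-(real CARD('n) + \<sigma>) / 2)"

definition sup_ker :: "real \<Rightarrow> real^'n \<Rightarrow> real \<Rightarrow> real \<Rightarrow> real" where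
  "sup_ker \<gamma> x y \<sigma> = (SUP z\<in>ball x (\<gamma> * norm x). poisson_kernel \<sigma> y z)"

definition inf_ker :: "real \<Rightarrow> real^'n \<Rightarrow> real \<Rightarrow> real \<Rightarrow> real" where
  "inf_ker \<gamma> x y \<sigma> = (INF z\<in>ball x (\<gamma> * norm x). poisson_kernel \<sigma> y z)"

end

theory Submission
  imports Defs
begin


lemma sup_lem:
  fixes x :: "'a::real_normed_vector"
  assumes K: "K > 0" and y: "y > 0" and g: "0 < \<gamma>" "\<gamma> < 1" and x: "x \<noteq> 0" and e: "e < 0"
  shows "(SUP z\<in>ball x (\<gamma> * norm x). K * (y\<^sup>2 + (norm z)\<^sup>2) powr e)
          = K * (y\<^sup>2 + (norm x * (1 - \<gamma>))\<^sup>2) powr e"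
proof -
  define F where "F z = K * (y\<^sup>2 + (norm z)\<^sup>2) powr e" for z :: 'a
  define r where "r = norm x"
  have r: "r > 0" using x by (simp add: r_def)
  have ne: "ball x (\<gamma> * norm x) \<noteq> {}" using r g by (simp add: r_def not_le)
  have up: "F z \<le> K * (y\<^sup>2 + (r * (1 - \<gamma>))\<^sup>2) powr e" if "z \<in> ball x (\<gamma> * norm x)" for z
  proof -
    have "norm z \<ge> r - dist x z" using norm_triangle_ineq2[of x z] by (simp add: r_def dist_norm)
    then have "norm z > r * (1 - \<gamma>)" using that by (simp add: r_def algebra_simps)
    moreover have "r * (1 - \<gamma>) \<ge> 0" using r g by simp
    ultimately have "(r * (1 - \<gamma>))\<^sup>2 \<le> (norm z)\<^sup>2" by (intro power_mono) auto
    then have "(y\<^sup>2 + (norm z)\<^sup>2) powr e \<le> (y\<^sup>2 + (r * (1 - \<gamma>))\<^sup>2) powr e"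
      using e y by (intro powr_mono2') (auto intro: add_pos_nonneg)
    then show ?thesis using K by (simp add: F_def)
  qed
  have bdd: "bdd_above (F ` ball x (\<gamma> * norm x))"
    using up by (intro bdd_aboveI2) auto
  define h where "h t = F (t *\<^sub>R x)" for t
  have cont: "isCont h (1 - \<gamma>)" unfolding h_def F_def using y
    by (intro continuous_intros) (auto simp: add_pos_nonneg)
  have lim: "(h \<longlongrightarrow> h (1 - \<gamma>)) (at_right (1 - \<gamma>))"
    using cont unfolding isCont_def by (rule tendsto_mono[OF at_le, rotated]) simp
  have ev: "eventually (\<lambda>t. h t \<le> (SUP z\<in>ball x (\<gamma> * norm x). F z)) (at_right (1 - \<gamma>))"
    using eventually_at_right_real[of "1 - \<gamma>" 1] 
  proof (rule eventually_mono)
    fix t assume t: "t \<in> {1 - \<gamma><..<1}"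
    have "x - t *\<^sub>R x = (1 - t) *\<^sub>R x" by (simp add: algebra_simps)
    then have "dist x (t *\<^sub>R x) = \<bar>1 - t\<bar> * r"
      by (simp add: dist_norm r_def)
    also have "\<dots> < \<gamma> * r" using t r by (intro mult_strict_right_mono) auto
    finally show "h t \<le> (SUP z\<in>ball x (\<gamma> * norm x). F z)" unfolding h_def
      by (intro cSUP_upper bdd) (simp add: r_def)
  qed (use g in auto)
  have "h (1 - \<gamma>) \<le> (SUP z\<in>ball x (\<gamma> * norm x). F z)"
    by (rule tendsto_upperbound[OF lim ev]) simp
  moreover have "h (1 - \<gamma>) = K * (y\<^sup>2 + (r * (1 - \<gamma>))\<^sup>2) powr e"
    using g by (simp add: h_def F_def r_def power_mult_distrib mult.commute)
  moreover have "(SUP z\<in>ball x (\<gamma> * norm x). F z) \<le> K * (y\<^sup>2 + (r * (1 - \<gamma>))\<^sup>2) powr e"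
    using up ne by (intro cSUP_least) auto
  ultimately show ?thesis unfolding F_def r_def by simp
qed


lemma inf_lem:
  fixes x :: "'a::real_normed_vector"
  assumes K: "K > 0" and y: "y > 0" and g: "0 < \<gamma>" "\<gamma> < 1" and x: "x \<noteq> 0" and e: "e < 0"
  shows "(INF z\<in>ball x (\<gamma> * norm x). K * (y\<^sup>2 + (norm z)\<^sup>2) powr e)
          = K * (y\<^sup>2 + (norm x * (1 + \<gamma>))\<^sup>2) powr e"
proof -
  define F where "F z = K * (y\<^sup>2 + (norm z)\<^sup>2) powr e" for z :: 'a
  define r where "r = norm x"
  have r: "r > 0" using x by (simp add: r_def)
  have ne: "ball x (\<gamma> * norm x) \<noteq> {}" using r g by (simp add: r_def not_le)
  have lo: "F z \<ge> K * (y\<^sup>2 + (r * (1 + \<gamma>))\<^sup>2) powr e" if "z \<in> ball x (\<gamma> * norm x)" for z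
  proof -
    have "norm z \<le> r + dist x z" using norm_triangle_ineq[of x "z - x"] by (simp add: r_def dist_norm norm_minus_commute)
    then have "norm z < r * (1 + \<gamma>)" using that by (simp add: r_def algebra_simps)
    then have "(norm z)\<^sup>2 \<le> (r * (1 + \<gamma>))\<^sup>2" by (intro power_mono) auto
    then have "(y\<^sup>2 + (norm z)\<^sup>2) powr e \<ge> (y\<^sup>2 + (r * (1 + \<gamma>))\<^sup>2) powr e"
      using e y by (intro powr_mono2') (auto intro: add_pos_nonneg)
    then show ?thesis using K by (simp add: F_def)
  qed
  have bdd: "bdd_below (F ` ball x (\<gamma> * norm x))"
    using lo by (intro bdd_belowI2) auto
  define h where "h t = F (t *\<^sub>R x)" for t
  have cont: "isCont h (1 + \<gamma>)" unfolding h_def F_def using y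
    by (intro continuous_intros) (auto simp: add_pos_nonneg)
  have lim: "(h \<longlongrightarrow> h (1 + \<gamma>)) (at_left (1 + \<gamma>))"
    using cont unfolding isCont_def by (rule tendsto_mono[OF at_le, rotated]) simp
  have ev: "eventually (\<lambda>t. h t \<ge> (INF z\<in>ball x (\<gamma> * norm x). F z)) (at_left (1 + \<gamma>))"
    using eventually_at_left_real[of 1 "1 + \<gamma>"] 
  proof (rule eventually_mono)
    fix t assume t: "t \<in> {1<..<1 + \<gamma>}"
    have "x - t *\<^sub>R x = (1 - t) *\<^sub>R x" by (simp add: algebra_simps)
    then have "dist x (t *\<^sub>R x) = \<bar>1 - t\<bar> * r"
      by (simp add: dist_norm r_def)
    also have "\<dots> < \<gamma> * r" using t r by (intro mult_strict_right_mono) auto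
    finally show "h t \<ge> (INF z\<in>ball x (\<gamma> * norm x). F z)" unfolding h_def
      by (intro cINF_lower bdd) (simp add: r_def)
  qed (use g in auto)
  have "h (1 + \<gamma>) \<ge> (INF z\<in>ball x (\<gamma> * norm x). F z)"
    by (rule tendsto_lowerbound[OF lim ev]) simp
  moreover have "h (1 + \<gamma>) = K * (y\<^sup>2 + (r * (1 + \<gamma>))\<^sup>2) powr e"
    using g by (simp add: h_def F_def r_def power_mult_distrib mult.commute)
  moreover have "(INF z\<in>ball x (\<gamma> * norm x). F z) \<ge> K * (y\<^sup>2 + (r * (1 + \<gamma>))\<^sup>2) powr e"
    using lo ne by (intro cINF_greatest) auto
  ultimately show ?thesis unfolding F_def r_def by simp
qed



lemma integrand_int:
  fixes N :: nat and \<sigma> :: real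
  assumes s: "\<sigma> > 0" and N: "N \<ge> 1"
  shows "set_integrable lborel {0<..} (\<lambda>\<rho>. (1 + \<rho>\<^sup>2) powr (-(real N + \<sigma>) / 2) * \<rho> ^ (N - 1))"
proof -
  define f where "f \<rho> = (1 + \<rho>\<^sup>2) powr (-(real N + \<sigma>) / 2) * \<rho> ^ (N - 1)" for \<rho> :: real
  have I1: "set_integrable lborel {0..1} f"
    unfolding f_def by (intro borel_integrable_atLeastAtMost' continuous_intros) (auto simp: add_nonneg_eq_0_iff)
  have I1': "set_integrable lborel {0<..1} f"
    by (rule set_integrable_subset[OF I1]) auto
  have bnd: "f \<rho> \<le> \<rho> powr (- \<sigma> - 1)" if "\<rho> \<ge> 1" for \<rho>
  proof -
    have "(1 + \<rho>\<^sup>2) powr (-(real N + \<sigma>) / 2) \<le> (\<rho>\<^sup>2) powr (-(real N + \<sigma>) / 2)"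
      using that s by (intro powr_mono2') auto
    also have "\<dots> = \<rho> powr (2 * (-(real N + \<sigma>) / 2))"
      using that by (simp add: powr_powr flip: powr_numeral)
    also have "2 * (-(real N + \<sigma>) / 2) = -(real N + \<sigma>)" by simp
    finally have a: "(1 + \<rho>\<^sup>2) powr (-(real N + \<sigma>) / 2) \<le> \<rho> powr (-(real N + \<sigma>))" .
    have b: "\<rho> ^ (N - 1) = \<rho> powr (real N - 1)"
      using that N by (simp add: powr_realpow of_nat_diff flip: powr_realpow)
    have "f \<rho> \<le> \<rho> powr (-(real N + \<sigma>)) * \<rho> powr (real N - 1)"
      unfolding f_def b using a that by (intro mult_right_mono) auto
    also have "\<dots> = \<rho> powr (- \<sigma> - 1)" using that by (simp add: powr_add [symmetric])
    finally show ?thesis .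
  qed
  have I2: "set_integrable lborel {1..} f"
    unfolding set_integrable_def
  proof (rule Bochner_Integration.integrable_bound[OF _ _ AE_I2])
    have "(\<lambda>t. t powr (- \<sigma> - 1)) integrable_on {1..}"
      using has_integral_powr_to_inf[of "- \<sigma> - 1" 1] s unfolding integrable_on_def by auto
    hence "(\<lambda>t. t powr (- \<sigma> - 1)) absolutely_integrable_on {1..}"
      by (subst absolutely_integrable_on_iff_nonneg) auto
    from this [unfolded set_integrable_def]
    show "integrable lborel (\<lambda>x. indicat_real {1..} x *\<^sub>R (x powr (- \<sigma> - 1)))"
      by (subst (asm) integrable_completion) auto
  next
    fix x :: real
    have "0 \<le> f x" if "x \<ge> 1" using that unfolding f_def by auto
    thus "norm (indicator {1..} x *\<^sub>R f x) \<le> norm (indicator {1..} x *\<^sub>R (x powr (- \<sigma> - 1)))"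
      using bnd by (auto simp: indicator_def)
  qed (auto simp: f_def)
  have "set_integrable lborel ({0<..1} \<union> {1..}) f"
    by (intro set_integrable_Un I1' I2) auto
  also have "{0<..1} \<union> {1..} = {0::real<..}" by auto
  finally show ?thesis unfolding f_def .
qed

lemma integrand_pos:
  fixes N :: nat and \<sigma> :: real
  assumes s: "\<sigma> > 0" and N: "N \<ge> 1"
  shows "(LBINT \<rho>:{0<..}. (1 + \<rho>\<^sup>2) powr (-(real N + \<sigma>) / 2) * \<rho> ^ (N - 1)) > 0"
proof -
  define f where "f \<rho> = (1 + \<rho>\<^sup>2) powr (-(real N + \<sigma>) / 2) * \<rho> ^ (N - 1)" for \<rho> :: real
  have fpos: "f \<rho> > 0" if "\<rho> > 0" for \<rho>
  proof -
    have "1 + \<rho>\<^sup>2 > 0" by (simp add: add_pos_nonneg)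
    then show ?thesis using that unfolding f_def by simp
  qed
  have int: "integrable lborel (\<lambda>x. indicator {0<..} x *\<^sub>R f x)"
    using integrand_int[OF s N] unfolding set_integrable_def f_def .
  have nn: "AE x in lborel. 0 \<le> indicator {0<..} x *\<^sub>R f x"
    by (auto simp: f_def indicator_def)
  have ge: "(LBINT \<rho>:{0<..}. f \<rho>) \<ge> 0" unfolding set_lebesgue_integral_def
    using nn by (intro integral_nonneg_AE) auto
  have ne: "(LBINT \<rho>:{0<..}. f \<rho>) \<noteq> 0"
  proof
    assume "(LBINT \<rho>:{0<..}. f \<rho>) = 0"
    then have "AE x in lborel. indicator {0<..} x *\<^sub>R f x = 0"
      unfolding set_lebesgue_integral_def using integral_nonneg_eq_0_iff_AE[OF int] nn by auto
    then have "AE x in lborel. x \<notin> {0::real<..}"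
    proof (rule AE_mp, intro AE_I2 impI)
      fix x :: real assume a: "indicator {0<..} x *\<^sub>R f x = 0"
      show "x \<notin> {0<..}"
      proof
        assume "x \<in> {0<..}"
        then show False using fpos[of x] a by (auto simp: indicator_def)
      qed
    qed
    then have "emeasure lborel {0::real<..} = 0"
      by (subst (asm) AE_iff_measurable[OF _ refl]) (auto simp: greaterThan_def)
    moreover have "emeasure lborel {0::real<..<1} \<le> emeasure lborel {0::real<..}"
      by (intro emeasure_mono) auto
    ultimately show False by simp
  qed
  show ?thesis using ge ne unfolding f_def by simp
qed



lemma frac_lt:
  fixes y r \<gamma> :: real
  assumes y: "y > 0" and g: "0 < \<gamma>" "\<gamma> < 1" and r: "r > 0"
  shows "(y\<^sup>2 + (r * (1 + \<gamma>))\<^sup>2) / (y\<^sup>2 + (r * (1 - \<gamma>))\<^sup>2) < ((1 + \<gamma>) / (1 - \<gamma>))\<^sup>2"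
proof -
  have A: "y\<^sup>2 + (r * (1 - \<gamma>))\<^sup>2 > 0" using y by (simp add: add_pos_nonneg)
  have c: "(1 - \<gamma>)\<^sup>2 > 0" using g by simp
  have lt: "(1 - \<gamma>)\<^sup>2 < (1 + \<gamma>)\<^sup>2" using g by (intro power_strict_mono) auto
  have "(y\<^sup>2 + (r * (1 + \<gamma>))\<^sup>2) * (1 - \<gamma>)\<^sup>2 = y\<^sup>2 * (1 - \<gamma>)\<^sup>2 + r\<^sup>2 * (1 + \<gamma>)\<^sup>2 * (1 - \<gamma>)\<^sup>2"
    by (simp only: power_mult_distrib distrib_right)
  also have "\<dots> < y\<^sup>2 * (1 + \<gamma>)\<^sup>2 + r\<^sup>2 * (1 + \<gamma>)\<^sup>2 * (1 - \<gamma>)\<^sup>2"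
    using lt y by simp
  also have "\<dots> = (1 + \<gamma>)\<^sup>2 * (y\<^sup>2 + (r * (1 - \<gamma>))\<^sup>2)"
    by (simp only: power_mult_distrib distrib_left mult.commute mult.left_commute)
  finally show ?thesis using A c by (simp add: power_divide divide_simps)
qed

lemma q_pow:
  fixes q p :: real
  assumes "q > 0"
  shows "q powr p = (q\<^sup>2) powr (p / 2)"
proof -
  have "q\<^sup>2 = q powr 2" using assms by (simp add: powr_numeral)
  then show ?thesis by (simp add: powr_powr)
qed

lemma ratio_pow:
  fixes A B e :: real
  assumes "A > 0" "B > 0"
  shows "A powr e / B powr e = (B / A) powr (-e)"
  using assms divide_powr_uminus powr_divide by auto

lemma I_pos:
  assumes "\<sigma> > 0"
  shows "I_const TYPE('n::finite) \<sigma> > 0"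
proof -
  have N: "CARD('n) \<ge> 1" by (simp add: Suc_leI)
  have "sphere_area TYPE('n) > 0"
    unfolding sphere_area_def using content_ball_pos[of 1 "0::real^'n"] N by simp
  then show ?thesis unfolding I_const_def
    using integrand_pos[OF assms N] by simp
qed

theorem proposition3p1:
  fixes \<sigma> \<gamma> :: real
  assumes "0 < \<sigma>" "\<sigma> < 2" "0 < \<gamma>" "\<gamma> < 1"
  shows "(\<forall>(x::real^'n) y. x \<noteq> 0 \<and> 0 < y \<longrightarrow>
            sup_ker \<gamma> x y \<sigma> / inf_ker \<gamma> x y \<sigma>
              < ((1 + \<gamma>) / (1 - \<gamma>)) powr (real CARD('n) + \<sigma>))
       \<and> (SUP p\<in>{(x::real^'n, y). x \<noteq> 0 \<and> 0 < y}.
            sup_ker \<gamma> (fst p) (snd p) \<sigma> / inf_ker \<gamma> (fst p) (snd p) \<sigma>)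
           = ((1 + \<gamma>) / (1 - \<gamma>)) powr (real CARD('n) + \<sigma>)"
proof -
  define e where "e = -(real CARD('n) + \<sigma>) / 2"
  define q where "q = (1 + \<gamma>) / (1 - \<gamma>)"
  define R where "R y r = ((y\<^sup>2 + (r * (1 + \<gamma>))\<^sup>2) / (y\<^sup>2 + (r * (1 - \<gamma>))\<^sup>2)) powr (-e)" for y r :: real
  have e: "e < 0" using assms by (simp add: e_def add_pos_pos)
  have q: "q > 0" using assms by (simp add: q_def)
  have B: "q powr (real CARD('n) + \<sigma>) = (q\<^sup>2) powr (-e)"
  proof -
    have me: "-e = (real CARD('n) + \<sigma>) / 2" unfolding e_def by (simp add: field_simps)
    show ?thesis unfolding me by (rule q_pow[OF q])
  qed
  have Ip: "I_const TYPE('n) \<sigma> > 0" using I_pos assms by blast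
  have rat: "sup_ker \<gamma> x y \<sigma> / inf_ker \<gamma> x y \<sigma> = R y (norm x)" if x: "(x::real^'n) \<noteq> 0" and y: "y > 0" for x y
  proof -
    define K where "K = inverse (I_const TYPE('n) \<sigma>) * y powr \<sigma>"
    have K: "K > 0" using Ip y by (simp add: K_def)
    have pk: "poisson_kernel \<sigma> y z = K * (y\<^sup>2 + (norm z)\<^sup>2) powr e" for z :: "real^'n"
      by (simp add: poisson_kernel_def K_def e_def)
    have "sup_ker \<gamma> x y \<sigma> = K * (y\<^sup>2 + (norm x * (1 - \<gamma>))\<^sup>2) powr e"
      unfolding sup_ker_def pk using sup_lem[OF K y assms(3,4) x e] .
    moreover have "inf_ker \<gamma> x y \<sigma> = K * (y\<^sup>2 + (norm x * (1 + \<gamma>))\<^sup>2) powr e"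
      unfolding inf_ker_def pk using inf_lem[OF K y assms(3,4) x e] .
    moreover have "y\<^sup>2 + (norm x * (1 - \<gamma>))\<^sup>2 > 0" "y\<^sup>2 + (norm x * (1 + \<gamma>))\<^sup>2 > 0"
      using y by (simp_all add: add_pos_nonneg)
    ultimately show ?thesis using K by (simp add: R_def ratio_pow)
  qed
  have lt: "R y r < q powr (real CARD('n) + \<sigma>)" if "y > 0" "r > 0" for y r
  proof -
    have "R y r < (q\<^sup>2) powr (-e)" unfolding R_def q_def
      using frac_lt[OF that(1) assms(3,4) that(2)] e that
      by (intro powr_less_mono2) (auto intro!: divide_nonneg_pos add_pos_nonneg)
    then show ?thesis using B by simp
  qed
  have part1: "\<forall>(x::real^'n) y. x \<noteq> 0 \<and> 0 < y \<longrightarrow>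
            sup_ker \<gamma> x y \<sigma> / inf_ker \<gamma> x y \<sigma> < q powr (real CARD('n) + \<sigma>)"
    using rat lt by simp
  define S where "S = {(x::real^'n, y::real). x \<noteq> 0 \<and> 0 < y}"
  define G where "G p = sup_ker \<gamma> (fst p) (snd p) \<sigma> / inf_ker \<gamma> (fst p) (snd p) \<sigma>" for p :: "(real^'n) \<times> real"
  define x0 :: "real^'n" where "x0 = axis undefined 1"
  have x0: "x0 \<noteq> 0" "norm x0 = 1" unfolding x0_def by (auto simp: axis_eq_0_iff)
  have Gless: "G p < q powr (real CARD('n) + \<sigma>)" if "p \<in> S" for p
    using part1 that by (auto simp: S_def G_def)
  have Sne: "S \<noteq> {}" using x0 by (auto simp: S_def intro: exI[of _ 1])
  have bdd: "bdd_above (G ` S)" using Gless by (intro bdd_aboveI2) (auto intro: less_imp_le)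
  have le1: "(SUP p\<in>S. G p) \<le> q powr (real CARD('n) + \<sigma>)"
    using Gless Sne by (intro cSUP_least) (auto intro: less_imp_le)
  define h where "h y = R y 1" for y
  have cont: "isCont h 0" unfolding h_def R_def using assms
    by (intro continuous_intros) (auto simp: add_pos_nonneg)
  have lim: "(h \<longlongrightarrow> h 0) (at_right 0)"
    using cont unfolding isCont_def by (rule tendsto_mono[OF at_le, rotated]) simp
  have h0: "h 0 = (q\<^sup>2) powr (-e)" unfolding h_def R_def q_def by (simp add: power_divide)
  have ev: "eventually (\<lambda>y. h y \<le> (SUP p\<in>S. G p)) (at_right 0)"
    using eventually_at_right_real[of 0 1]
  proof (rule eventually_mono)
    fix y :: real assume y: "y \<in> {0<..<1}"
    then have "(x0, y) \<in> S" using x0 by (simp add: S_def)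
    moreover have "G (x0, y) = h y" using rat[OF x0(1)] y x0 by (simp add: G_def h_def)
    ultimately show "h y \<le> (SUP p\<in>S. G p)" using cSUP_upper[OF _ bdd] by metis
  qed simp
  have "h 0 \<le> (SUP p\<in>S. G p)" by (rule tendsto_upperbound[OF lim ev]) simp
  then have "q powr (real CARD('n) + \<sigma>) \<le> (SUP p\<in>S. G p)" using h0 B by simp
  with le1 have "(SUP p\<in>S. G p) = q powr (real CARD('n) + \<sigma>)" by simp
  then show ?thesis using part1 unfolding S_def G_def q_def by simp
qed

end
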